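(* For real parameters $a,\epsilon$, let $Q_{a,\epsilon}$ be the region bounded by the segment from $(0,0)$ to $(1,0)$, the segment from $(0,0)$ to $(0,\tfrac12)$, the segment from $(1,0)$ to $(1,\tfrac12+a)$, and the curve $y(x)=\epsilon x^2+(a-\epsilon)x+\tfrac12$, $x\in[0,1]$. For $p,q$ near $\tfrac12$ and $\theta$ near $0$, let $\Gamma(p,q,\theta)$ be the circular arc of central angle $\theta$ joining $(q,0)$ and $(p,y(p))$, with radius $R=\frac{\sqrt{(q-p)^2+y(p)^2}}{2\sin(\theta/2)}$ (for $\theta=0$, the straight segment), and define $$A_{\mathrm{tot}}=\int_0^1 y(x)\,dx,\quad A_1=\int_0^p y(x)\,dx+\tfrac12 y(p)(q-p)+\tfrac12R^2\theta-\tfrac14\big[(q-p)^2+y(p)^2\big]\cot(\theta/2),\quad A_2=A_{\mathrm{tot}}-A_1,$$ (the left and right areas into which $\Gamma$ divides $Q_{a,\epsilon}$, with $\theta>0$ meaning the circular cap is added to the left region), and $$\mathrm{RC}(p,q,\theta;a,\epsilon)=\frac{R\,\theta}{A_1A_2}.$$ Then $\mathrm{RC}$ extends smoothly to a neighborhood of $(p,q,\theta;a,\epsilon)=(\tfrac12,\tfrac12,0;0,0)$; at $a=\epsilon=0$ the point $(p,q,\theta)=(\tfrac12,\tfrac12,0)$ is a nondegenerate local minimum with Hessian in the variables $(q,p,\theta)$ equal to $$\begin{pmatrix}48&-16&\tfrac43\\-16&48&\tfrac43\\ \tfrac43&\tfrac43&\tfrac79\end{pmatrix};$$ and for $\epsilon=0$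 and $a$ small, the critical point $(q,p,\theta)$ of $\mathrm{RC}(\cdot;a,0)$ near $(\tfrac12,\tfrac12,0)$ satisfies $$\Big(q-\tfrac12,\;p-\tfrac12,\;\theta\Big)=a\Big(\tfrac1{12},\;-\tfrac16,\;1\Big)+O(a^2).$$
   Context: $\mathrm{RC}$ is the Ratio Cut quotient $\mathcal H^1(\Gamma)/(|S|\,|Q\setminus S|)$ (length of the cut divided by the product of the two areas) restricted to circular-arc cuts parametrized by their endpoints $(q,0)$, $(p,y(p))$ and central angle $\theta$. *)

theory Defs
  imports "HOL-Analysis.Analysis"
begin

definition yfun :: "real \<Rightarrow> real \<Rightarrow> real \<Rightarrow> real" where
  "yfun a e x = e * x^2 + (a - e) * x + 1/2"

definition chord2 :: "real \<Rightarrow> real \<Rightarrow> real \<Rightarrow> real \<Rightarrow> real" where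
  "chord2 a e p q = (q - p)^2 + (yfun a e p)^2"

definition Rrad :: "real \<Rightarrow> real \<Rightarrow> real \<Rightarrow> real \<Rightarrow> real \<Rightarrow> real" where
  "Rrad a e p q \<theta> = sqrt (chord2 a e p q) / (2 * sin (\<theta> / 2))"

definition Atot :: "real \<Rightarrow> real \<Rightarrow> real" where
  "Atot a e = integral {0..1} (yfun a e)"

definition A1 :: "real \<Rightarrow> real \<Rightarrow> real \<Rightarrow> real \<Rightarrow> real \<Rightarrow> real" where
  "A1 a e p q \<theta> = integral {0..p} (yfun a e) + 1/2 * yfun a e p * (q - p)
     + 1/2 * (Rrad a e p q \<theta>)^2 * \<theta> - 1/4 * chord2 a e p q * cot (\<theta> / 2)"

definition A2 :: "real \<Rightarrow> real \<Rightarrow> real \<Rightarrow> real \<Rightarrow> real \<Rightarrow> real" where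
  "A2 a e p q \<theta> = Atot a e - A1 a e p q \<theta>"

text \<open>Ratio Cut quotient RC(p,q,theta;a,eps), literal formula (meaningful for theta \<noteq> 0).\<close>
definition RC :: "real \<Rightarrow> real \<Rightarrow> real \<Rightarrow> real \<Rightarrow> real \<Rightarrow> real" where
  "RC p q \<theta> a e = Rrad a e p q \<theta> * \<theta> / (A1 a e p q \<theta> * A2 a e p q \<theta>)"

fun Ck_on :: "nat \<Rightarrow> 'a::euclidean_space set \<Rightarrow> ('a \<Rightarrow> real) \<Rightarrow> bool" where
  "Ck_on 0 U f = continuous_on U f"
| "Ck_on (Suc k) U f = (f differentiable_on U \<and>
      (\<forall>b\<in>Basis. Ck_on k U (\<lambda>x. frechet_derivative f (at x) b)))"

definition smooth_on :: "'a::euclidean_space set \<Rightarrow> ('a \<Rightarrow> real) \<Rightarrow> bool" where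
  "smooth_on U f = (\<forall>k. Ck_on k U f)"

definition dd :: "('a::real_normed_vector \<Rightarrow> real) \<Rightarrow> 'a \<Rightarrow> 'a \<Rightarrow> real" where
  "dd f v x = frechet_derivative f (at x) v"

definition Hess3 :: "(real^3 \<Rightarrow> real) \<Rightarrow> real^3 \<Rightarrow> real^3^3" where
  "Hess3 G x = (\<chi> i j. dd (\<lambda>z. dd G (axis j 1) z) (axis i 1) x)"

definition pt5 :: "real \<Rightarrow> real \<Rightarrow> real \<Rightarrow> real \<Rightarrow> real \<Rightarrow> real^5" where
  "pt5 q p \<theta> a e = vector [q, p, \<theta>, a, e]"

definition emb5 :: "real^3 \<Rightarrow> real \<Rightarrow> real \<Rightarrow> real^5" where
  "emb5 z a e = pt5 (z$1) (z$2) (z$3) a e"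

definition base3 :: "real^3" where
  "base3 = vector [1/2, 1/2, 0]"

end

theory Submission
  imports Defs
begin

datatype 'n ex = Cst real | Var 'n | Add "'n ex" "'n ex" | Mul "'n ex" "'n ex"
  | Inv "'n ex" | Sqr "'n ex" | Ps "nat \<Rightarrow> real" "'n ex"

primrec ev :: "'n::finite ex \<Rightarrow> real^'n \<Rightarrow> real" where
  "ev (Cst c) x = c"
| "ev (Var j) x = x $ j"
| "ev (Add a b) x = ev a x + ev b x"
| "ev (Mul a b) x = ev a x * ev b x"
| "ev (Inv a) x = inverse (ev a x)"
| "ev (Sqr a) x = sqrt (ev a x)"
| "ev (Ps c a) x = (\<Sum>n. c n * (ev a x) ^ n)"

definition entire :: "(nat \<Rightarrow> real) \<Rightarrow> bool" where
  "entire c = (\<forall>y::real. summable (\<lambda>n. c n * y ^ n))"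

primrec wfe :: "'n::finite ex \<Rightarrow> real^'n \<Rightarrow> bool" where
  "wfe (Cst c) x = True"
| "wfe (Var j) x = True"
| "wfe (Add a b) x = (wfe a x \<and> wfe b x)"
| "wfe (Mul a b) x = (wfe a x \<and> wfe b x)"
| "wfe (Inv a) x = (wfe a x \<and> ev a x \<noteq> 0)"
| "wfe (Sqr a) x = (wfe a x \<and> ev a x > 0)"
| "wfe (Ps c a) x = (wfe a x \<and> entire c)"

primrec dr :: "'n::finite ex \<Rightarrow> 'n \<Rightarrow> 'n ex" where
  "dr (Cst c) i = Cst 0"
| "dr (Var j) i = Cst (if j = i then 1 else 0)"
| "dr (Add a b) i = Add (dr a i) (dr b i)"
| "dr (Mul a b) i = Add (Mul (dr a i) b) (Mul a (dr b i))"
| "dr (Inv a) i = Mul (Cst (-1)) (Mul (dr a i) (Mul (Inv a) (Inv a)))"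
| "dr (Sqr a) i = Mul (dr a i) (Inv (Mul (Cst 2) (Sqr a)))"
| "dr (Ps c a) i = Mul (Ps (diffs c) a) (dr a i)"

lemma entire_diffs: "entire c \<Longrightarrow> entire (diffs c)"
  unfolding entire_def using termdiff_converges_all by blast

lemma wf_dr: "wfe e x \<Longrightarrow> wfe (dr e i) x"
  by (induction e) (auto simp: entire_diffs)

definition DD :: "'n::finite ex \<Rightarrow> real^'n \<Rightarrow> real^'n \<Rightarrow> real" where
  "DD e x h = (\<Sum>i\<in>UNIV. h $ i * ev (dr e i) x)"

lemma chain1:
  assumes "(f has_derivative f') (at x)" "(g has_field_derivative D) (at (f x))"
  shows "((\<lambda>y. g (f y)) has_derivative (\<lambda>h. D * f' h)) (at x)"
  using has_derivative_compose[OF assms(1) assms(2)[unfolded has_field_derivative_def]] by simp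

lemma has_deriv_ev: "wfe e x \<Longrightarrow> ((\<lambda>y. ev e y) has_derivative DD e x) (at x)"
proof (induction e)
  case (Cst c)
  then show ?case by (auto simp: DD_def intro!: has_derivative_eq_rhs[OF has_derivative_const])
next
  case (Var j)
  have "bounded_linear (\<lambda>y::real^'a. y $ j)" by blast
  then have "((\<lambda>y::real^'a. y $ j) has_derivative (\<lambda>y. y $ j)) (at x)"
    by (rule bounded_linear_imp_has_derivative)
  moreover have "ev (Var j) = (\<lambda>y. y $ j)" by (rule ext) simp
  moreover have "DD (Var j) x = (\<lambda>h. h $ j)"
  proof
    fix h :: "real^'a"
    have "DD (Var j) x h = (\<Sum>i\<in>UNIV. if j = i then h $ i else 0)"
      unfolding DD_def by (rule sum.cong) auto
    then show "DD (Var j) x h = h $ j" by simp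
  qed
  ultimately show ?case by simp
next
  case (Add a b)
  then show ?case
    by (auto intro!: has_derivative_eq_rhs[OF has_derivative_add]
        simp: DD_def fun_eq_iff sum.distrib distrib_left)
next
  case (Mul a b)
  then show ?case
    by (auto intro!: has_derivative_eq_rhs[OF has_derivative_mult]
        simp: DD_def fun_eq_iff sum.distrib distrib_left sum_distrib_left sum_distrib_right mult_ac)
next
  case (Inv a)
  then have *: "((\<lambda>y. inverse (ev a y)) has_derivative (\<lambda>h. (- (inverse (ev a x) ^ Suc (Suc 0))) * DD a x h)) (at x)"
    by (intro chain1 DERIV_inverse) auto
  have e: "ev (Inv a) = (\<lambda>y. inverse (ev a y))" by (rule ext) simp
  have d: "DD (Inv a) x = (\<lambda>h. (- (inverse (ev a x) ^ Suc (Suc 0))) * DD a x h)"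
    by (simp add: DD_def fun_eq_iff sum_distrib_left mult_ac)
  show ?case using * unfolding e d .
next
  case (Sqr a)
  then have *: "((\<lambda>y. sqrt (ev a y)) has_derivative (\<lambda>h. (inverse (sqrt (ev a x)) / 2) * DD a x h)) (at x)"
    by (intro chain1 DERIV_real_sqrt) auto
  have e: "ev (Sqr a) = (\<lambda>y. sqrt (ev a y))" by (rule ext) simp
  have d: "DD (Sqr a) x = (\<lambda>h. (inverse (sqrt (ev a x)) / 2) * DD a x h)"
    by (simp add: DD_def fun_eq_iff sum_distrib_left mult_ac)
  show ?case using * unfolding e d .
next
  case (Ps c a)
  then have *: "((\<lambda>y. (\<Sum>n. c n * (ev a y) ^ n)) has_derivative (\<lambda>h. (\<Sum>n. diffs c n * (ev a x) ^ n) * DD a x h)) (at x)"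
    by (intro chain1 termdiffs_strong_converges_everywhere) (auto simp: entire_def)
  have e: "ev (Ps c a) = (\<lambda>y. (\<Sum>n. c n * (ev a y) ^ n))" by (rule ext) simp
  have d: "DD (Ps c a) x = (\<lambda>h. (\<Sum>n. diffs c n * (ev a x) ^ n) * DD a x h)"
    by (simp add: DD_def fun_eq_iff sum_distrib_left mult_ac)
  show ?case using * unfolding e d .
qed

lemma isCont_ev: "wfe e x \<Longrightarrow> isCont (ev e) x"
  using has_deriv_ev has_derivative_continuous by blast

lemma DD_axis: "DD e x (axis i 1) = ev (dr e i) x"
proof -
  have "DD e x (axis i 1) = (\<Sum>j\<in>UNIV. if i = j then ev (dr e j) x else 0)"
    unfolding DD_def by (rule sum.cong) (auto simp: axis_def)
  then show ?thesis by simp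
qed

lemma ev_nhds: "wfe e x \<Longrightarrow> eventually (\<lambda>y. wfe e y) (nhds x)"
proof (induction e)
  case (Inv a)
  then have "isCont (ev a) x" by (auto intro: isCont_ev)
  then have "(ev a \<longlongrightarrow> ev a x) (nhds x)" by (simp add: isCont_def tendsto_at_iff_tendsto_nhds)
  then have "eventually (\<lambda>y. ev a y \<noteq> 0) (nhds x)"
    using Inv by (intro tendsto_imp_eventually_ne) auto
  moreover have "eventually (\<lambda>y. wfe a y) (nhds x)" using Inv by simp
  ultimately show ?case by eventually_elim simp
next
  case (Sqr a)
  then have "isCont (ev a) x" by (auto intro: isCont_ev)
  then have "(ev a \<longlongrightarrow> ev a x) (nhds x)" by (simp add: isCont_def tendsto_at_iff_tendsto_nhds)
  then have "eventually (\<lambda>y. 0 < ev a y) (nhds x)"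
    using Sqr by (intro order_tendstoD(1)) auto
  moreover have "eventually (\<lambda>y. wfe a y) (nhds x)" using Sqr by simp
  ultimately show ?case by eventually_elim simp
next
  case (Add a b)
  then have "eventually (\<lambda>y. wfe a y) (nhds x)" "eventually (\<lambda>y. wfe b y) (nhds x)" by auto
  then show ?case by eventually_elim simp
next
  case (Mul a b)
  then have "eventually (\<lambda>y. wfe a y) (nhds x)" "eventually (\<lambda>y. wfe b y) (nhds x)" by auto
  then show ?case by eventually_elim simp
next
  case (Cst c) show ?case by (rule always_eventually) simp
next
  case (Var c) show ?case by (rule always_eventually) simp
next
  case (Ps c a)
  then have "eventually (\<lambda>y. wfe a y) (nhds x)" by auto
  then show ?case by eventually_elim (use Ps in simp)
qed

lemma open_wfe: "open {y. wfe e y}"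
proof -
  have "\<exists>T. open T \<and> x \<in> T \<and> T \<subseteq> {y. wfe e y}" if "x \<in> {y. wfe e y}" for x
  proof -
    have "eventually (\<lambda>y. wfe e y) (nhds x)" using ev_nhds that by auto
    then obtain S where "open S" "x \<in> S" "\<forall>y\<in>S. wfe e y" unfolding eventually_nhds by auto
    then show ?thesis by auto
  qed
  then show ?thesis using open_subopen[of "{y. wfe e y}"] by blast
qed

lemma Ck_ev:
  assumes "open U"
  shows "(\<forall>x\<in>U. wfe e x) \<Longrightarrow> (\<forall>x\<in>U. f x = ev e x) \<Longrightarrow> Ck_on k U f"
proof (induction k arbitrary: e f)
  case 0
  have "continuous_on U (ev e)"
    using 0 isCont_ev by (intro continuous_at_imp_continuous_on) auto
  then have "continuous_on U f" by (rule continuous_on_eq) (use 0 in auto)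
  then show ?case by simp
next
  case (Suc k)
  have hd: "(f has_derivative DD e x) (at x)" if "x \<in> U" for x
  proof -
    have "wfe e x" using Suc.prems(1) that by blast
    show ?thesis
      by (rule has_derivative_transform_within_open[OF has_deriv_ev[OF \<open>wfe e x\<close>] assms that])
        (use Suc.prems(2) in auto)
  qed
  have "f differentiable_on U"
    unfolding differentiable_on_def
  proof
    fix x assume "x \<in> U"
    then have "f differentiable (at x)" using hd differentiableI by blast
    then show "f differentiable (at x within U)" by (rule differentiable_at_withinI)
  qed
  moreover have "Ck_on k U (\<lambda>x. frechet_derivative f (at x) b)" if "b \<in> Basis" for b
  proof -
    from axis_inverse[OF that] obtain i where b: "b = axis i 1" by auto
    show ?thesis
    proof (rule Suc.IH[of "dr e i"])
      show "\<forall>x\<in>U. wfe (dr e i) x" using Suc.prems wf_dr by blast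
      show "\<forall>x\<in>U. frechet_derivative f (at x) b = ev (dr e i) x"
      proof
        fix x assume "x \<in> U"
        then have "frechet_derivative f (at x) = DD e x" using hd frechet_derivative_at by metis
        then show "frechet_derivative f (at x) b = ev (dr e i) x" using DD_axis b by simp
      qed
    qed
  qed
  ultimately show ?case by simp
qed

lemma has_deriv_comp:
  assumes "wfe e (g z)" "(g has_derivative g') (at z)"
  shows "((\<lambda>w. ev e (g w)) has_derivative (\<lambda>h. DD e (g z) (g' h))) (at z)"
  using has_derivative_compose[OF assms(2) has_deriv_ev[OF assms(1)]] .

definition PSf :: "(nat \<Rightarrow> real) \<Rightarrow> real \<Rightarrow> real" where
  "PSf c u = (\<Sum>n. c n * u ^ n)"

lemma entire_shift:
  assumes "entire c" shows "entire (\<lambda>n. c (Suc n))"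
  unfolding entire_def
proof
  fix y :: real
  show "summable (\<lambda>n. c (Suc n) * y ^ n)"
  proof (cases "y = 0")
    case True
    have "summable (\<lambda>n. if n = 0 then c (Suc 0) else (0::real))"
      by (rule summable_finite[of "{0}"]) auto
    then show ?thesis using True by (simp add: power_0_left if_distrib cong: if_cong)
  next
    case False
    have "summable (\<lambda>n. c n * y ^ n)" using assms unfolding entire_def by blast
    then have "summable (\<lambda>n. c (Suc n) * y ^ Suc n)" by (subst summable_Suc_iff)
    then have "summable (\<lambda>n. c (Suc n) * y ^ Suc n / y)" by (rule summable_divide)
    then show ?thesis using False by (simp add: field_simps)
  qed
qed

lemma entire_neg: "entire c \<Longrightarrow> entire (\<lambda>n. - c n)"
  unfolding entire_def by (auto dest: summable_minus)

lemma entire_sin: "entire sin_coeff"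
  unfolding entire_def
proof
  fix y :: real
  have "(\<lambda>n. sin_coeff n * y^n) sums sin y" using sin_converges[of y] by simp
  then show "summable (\<lambda>n. sin_coeff n * y^n)" by (rule sums_summable)
qed

lemma PSf_split:
  assumes "entire c" shows "PSf c u = c 0 + u * PSf (\<lambda>n. c (Suc n)) u"
proof -
  have s: "summable (\<lambda>n. c n * u ^ n)" using assms unfolding entire_def by blast
  have "(\<Sum>n. c (Suc n) * u ^ Suc n) = PSf c u - c 0"
    using suminf_split_head[OF s] unfolding PSf_def by simp
  moreover have "(\<Sum>n. c (Suc n) * u ^ Suc n) = u * PSf (\<lambda>n. c (Suc n)) u"
  proof -
    have s2: "summable (\<lambda>n. c (Suc n) * u ^ n)"
      using entire_shift[OF assms] unfolding entire_def by blast
    have "(\<Sum>n. c (Suc n) * u ^ Suc n) = (\<Sum>n. u * (c (Suc n) * u ^ n))"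
      by (simp add: mult_ac)
    also have "\<dots> = u * (\<Sum>n. c (Suc n) * u ^ n)" by (rule suminf_mult[OF s2])
    finally show ?thesis unfolding PSf_def .
  qed
  ultimately show ?thesis by simp
qed

definition Sc :: "nat \<Rightarrow> real" where "Sc n = sin_coeff (Suc n)"
definition Tc :: "nat \<Rightarrow> real" where "Tc n = - sin_coeff (Suc (Suc (Suc n)))"

lemma entire_Sc: "entire Sc"
  unfolding Sc_def using entire_shift[OF entire_sin] by simp

lemma entire_Tc: "entire Tc"
  unfolding Tc_def using entire_neg[OF entire_shift[OF entire_shift[OF entire_shift[OF entire_sin]]]] by simp

lemma sin_Sf: "sin u = u * PSf Sc u"
proof -
  have "sin u = PSf sin_coeff u"
    using sin_converges[of u] unfolding PSf_def by (simp add: sums_iff)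
  also have "\<dots> = u * PSf Sc u"
    using PSf_split[OF entire_sin] by (simp add: Sc_def[abs_def] sin_coeff_def)
  finally show ?thesis .
qed

lemma Sf_Tf: "PSf Sc u = 1 - u^2 * PSf Tc u"
proof -
  have "PSf Sc u = Sc 0 + u * (Sc 1 + u * PSf (\<lambda>n. Sc (Suc (Suc n))) u)"
    using PSf_split[OF entire_Sc, of u] PSf_split[OF entire_shift[OF entire_Sc], of u] by simp
  moreover have "PSf (\<lambda>n. Sc (Suc (Suc n))) u = - PSf Tc u"
  proof -
    have "summable (\<lambda>n. sin_coeff (Suc (Suc (Suc n))) * u ^ n)"
      using entire_shift[OF entire_shift[OF entire_shift[OF entire_sin]]] unfolding entire_def by blast
    then show ?thesis unfolding PSf_def Sc_def Tc_def by (simp add: suminf_minus)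
  qed
  ultimately show ?thesis by (simp add: Sc_def sin_coeff_def power2_eq_square algebra_simps)
qed

lemma exhaust_5:
  fixes x :: 5
  shows "x = 1 \<or> x = 2 \<or> x = 3 \<or> x = 4 \<or> x = 5"
proof (induct x)
  case (of_int z)
  then have "z = 0 \<or> z = 1 \<or> z = 2 \<or> z = 3 \<or> z = 4" by fastforce
  then show ?case by auto
qed

lemma UNIV_5: "UNIV = {1, 2, 3, 4, 5::5}"
  using exhaust_5 by auto

lemma sum_5: "sum f (UNIV::5 set) = f 1 + f 2 + f 3 + f 4 + f 5"
  unfolding UNIV_5 by (simp add: ac_simps)

lemma pt5_nth [simp]:
  "pt5 q p t a e $ 1 = q" "pt5 q p t a e $ 2 = p" "pt5 q p t a e $ 3 = t"
  "pt5 q p t a e $ 4 = a" "pt5 q p t a e $ 5 = e"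
  unfolding pt5_def vector_def by simp_all

lemma pt5_eta: "x = pt5 (x$1) (x$2) (x$3) (x$4) (x$5)"
  unfolding vec_eq_iff
proof
  fix i :: 5
  show "x $ i = pt5 (x$1) (x$2) (x$3) (x$4) (x$5) $ i" using exhaust_5[of i] by auto
qed

definition Sub :: "'n ex \<Rightarrow> 'n ex \<Rightarrow> 'n ex" where "Sub x y = Add x (Mul (Cst (-1)) y)"

definition eY :: "5 ex" where
  "eY = Add (Mul (Var 5) (Mul (Var 2) (Var 2))) (Add (Mul (Sub (Var 4) (Var 5)) (Var 2)) (Cst (1/2)))"
definition eD :: "5 ex" where "eD = Sub (Var 1) (Var 2)"
definition eC :: "5 ex" where "eC = Add (Mul eD eD) (Mul eY eY)"
definition eI :: "5 ex" where
  "eI = Add (Mul (Mul (Cst (1/3)) (Var 5)) (Mul (Var 2) (Mul (Var 2) (Var 2))))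
          (Add (Mul (Mul (Cst (1/2)) (Sub (Var 4) (Var 5))) (Mul (Var 2) (Var 2))) (Mul (Cst (1/2)) (Var 2)))"
definition eIt :: "5 ex" where
  "eIt = Add (Mul (Cst (1/3)) (Var 5)) (Add (Mul (Cst (1/2)) (Sub (Var 4) (Var 5))) (Cst (1/2)))"
definition eS :: "5 ex" where "eS = Ps Sc (Mul (Cst (1/2)) (Var 3))"
definition eT :: "5 ex" where "eT = Ps Tc (Var 3)"
definition eA :: "5 ex" where
  "eA = Add eI (Add (Mul (Mul (Cst (1/2)) eY) eD)
          (Mul eC (Mul (Mul (Cst (1/2)) (Var 3)) (Mul eT (Mul (Inv eS) (Inv eS))))))"
definition eE :: "5 ex" where
  "eE = Mul (Mul (Sqr eC) (Inv eS)) (Mul (Inv eA) (Inv (Sub eIt eA)))"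

lemma ev_Sub [simp]: "ev (Sub x y) z = ev x z - ev y z" by (simp add: Sub_def)
lemma wfe_Sub [simp]: "wfe (Sub x y) z = (wfe x z \<and> wfe y z)" by (simp add: Sub_def)

lemma ev_eY: "ev eY (pt5 q p t a e) = yfun a e p"
  by (simp add: eY_def yfun_def power2_eq_square)
lemma ev_eC: "ev eC (pt5 q p t a e) = chord2 a e p q"
  by (simp add: eC_def eD_def ev_eY chord2_def power2_eq_square)
lemma ev_eS: "ev eS (pt5 q p t a e) = PSf Sc (t/2)"
  by (simp add: eS_def PSf_def)
lemma ev_eT: "ev eT (pt5 q p t a e) = PSf Tc t"
  by (simp add: eT_def PSf_def)

lemma integral_yfun:
  assumes "0 \<le> p"
  shows "integral {0..p} (yfun a e) = e * p^3 / 3 + (a - e) * p^2 / 2 + p / 2"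
proof -
  have "(yfun a e has_integral ((\<lambda>x. e * x^3 / 3 + (a - e) * x^2 / 2 + x / 2) p
          - (\<lambda>x. e * x^3 / 3 + (a - e) * x^2 / 2 + x / 2) 0)) {0..p}"
    by (rule fundamental_theorem_of_calculus[OF assms])
      (auto simp: has_real_derivative_iff_has_vector_derivative[symmetric] yfun_def
        intro!: derivative_eq_intros simp: power2_eq_square field_simps)
  then show ?thesis by (simp add: integral_unique)
qed

lemma ev_eI: "0 \<le> p \<Longrightarrow> ev eI (pt5 q p t a e) = integral {0..p} (yfun a e)"
  by (simp add: eI_def integral_yfun power2_eq_square power3_eq_cube field_simps)

lemma ev_eIt: "ev eIt (pt5 q p t a e) = Atot a e"
  unfolding Atot_def by (simp add: eIt_def integral_yfun field_simps)

lemma trig_part: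
  assumes c: "0 \<le> c" and t: "t \<noteq> 0" and S: "PSf Sc (t/2) \<noteq> 0"
  shows "1/2 * (sqrt c / (2 * sin (t/2)))^2 * t - 1/4 * c * cot (t/2)
       = c * (1/2 * t) * (PSf Tc t * (inverse (PSf Sc (t/2)) * inverse (PSf Sc (t/2))))"
proof -
  define s where "s = t/2"
  define S where "S = PSf Sc s"
  define T where "T = PSf Tc t"
  have ts: "t = 2 * s" by (simp add: s_def)
  have sn: "sin s = s * S" by (simp add: S_def sin_Sf)
  have s0: "s \<noteq> 0" using t by (simp add: s_def)
  have S0: "S \<noteq> 0" using S by (simp add: S_def s_def)
  have sc: "sin s * cos s = sin t / 2" using sin_double[of s] ts by simp
  have st: "sin t = t * (1 - t^2 * T)" using sin_Sf[of t] Sf_Tf[of t] by (simp add: T_def)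
  have "sin s * cos s = t * (1 - t^2 * T) / 2" using sc st by simp
  then have "s * S * cos s = (2 * s) * (1 - (2 * s)^2 * T) / 2" unfolding sn ts .
  then have e1: "s * (S * cos s) = s * (1 - 4 * s^2 * T)"
    by (simp add: algebra_simps power2_eq_square)
  then have "S * cos s = 1 - 4 * s^2 * T" using s0 by simp
  then have cs: "cos s = (1 - 4 * s^2 * T) / S" using S0 by (simp add: field_simps)
  have sq: "(sqrt c)^2 = c" using c by simp
  have l1: "1/2 * (sqrt c / (2 * sin s))^2 * t = c / (4 * s * S^2)"
    unfolding sn power_divide sq ts using s0 S0 by (simp add: field_simps power2_eq_square)
  have l2: "1/4 * c * cot s = c * (1 - 4 * s^2 * T) / (4 * s * S^2)"
    unfolding cot_def cs sn using s0 S0 by (simp add: field_simps power2_eq_square)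
  have "c / (4 * s * S^2) - c * (1 - 4 * s^2 * T) / (4 * s * S^2) = c * s * T / S^2"
    using s0 S0 by (simp add: field_simps power2_eq_square)
  then have "1/2 * (sqrt c / (2 * sin s))^2 * t - 1/4 * c * cot s = c * s * T / S^2"
    using l1 l2 by simp
  then show ?thesis
    unfolding s_def[symmetric] S_def[symmetric] T_def[symmetric]
    using ts by (simp add: field_simps power2_eq_square)
qed

lemma ev_eE_RC:
  assumes w: "wfe eE (pt5 q p t a e)" and p: "0 \<le> p" and t: "t \<noteq> 0"
  shows "ev eE (pt5 q p t a e) = RC p q t a e"
proof -
  let ?x = "pt5 q p t a e"
  define S where "S = PSf Sc (t/2)"
  define c where "c = chord2 a e p q"
  have S0: "S \<noteq> 0" using w by (simp add: eE_def ev_eS S_def)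
  have c0: "0 \<le> c" by (simp add: chord2_def c_def)
  have sn: "sin (t/2) = t/2 * S" by (simp add: S_def sin_Sf)
  have A0: "ev eA ?x = integral {0..p} (yfun a e) + (1/2 * yfun a e p * (q-p)
       + c * (1/2*t) * (PSf Tc t * (inverse S * inverse S)))"
    by (simp add: eA_def ev_eI[OF p] ev_eY eD_def ev_eC ev_eT ev_eS S_def c_def)
  have A: "ev eA ?x = A1 a e p q t"
    unfolding A0 A1_def Rrad_def c_def[symmetric]
    using trig_part[OF c0 t S0[unfolded S_def]] unfolding S_def[symmetric] by linarith
  have R: "Rrad a e p q t * t = sqrt c * inverse S"
    unfolding Rrad_def sn c_def[symmetric] using t S0 by (simp add: field_simps)
  have E: "ev eE ?x = (sqrt c * inverse S) * (inverse (ev eA ?x) * inverse (Atot a e - ev eA ?x))"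
    by (simp add: eE_def ev_eC ev_eS ev_eIt S_def c_def)
  show ?thesis
    unfolding RC_def A2_def E R[symmetric] A by (simp add: divide_inverse)
qed

primrec jt :: "'n::finite ex \<Rightarrow> real^'n \<Rightarrow> 'n \<Rightarrow> 'n \<Rightarrow> real \<times> real \<times> real \<times> real" where
  "jt (Cst c) x i j = (c, 0, 0, 0)"
| "jt (Var k) x i j = (x $ k, if k = i then 1 else 0, if k = j then 1 else 0, 0)"
| "jt (Add a b) x i j = (case jt a x i j of (f, fi, fj, fij) \<Rightarrow> case jt b x i j of (g, gi, gj, gij) \<Rightarrow>
     (f + g, fi + gi, fj + gj, fij + gij))"
| "jt (Mul a b) x i j = (case jt a x i j of (f, fi, fj, fij) \<Rightarrow> case jt b x i j of (g, gi, gj, gij) \<Rightarrow>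
     (f * g, fi * g + f * gi, fj * g + f * gj, fij * g + fi * gj + fj * gi + f * gij))"
| "jt (Inv a) x i j = (case jt a x i j of (f, fi, fj, fij) \<Rightarrow>
     (inverse f, - fi / f^2, - fj / f^2, 2 * fi * fj / f^3 - fij / f^2))"
| "jt (Sqr a) x i j = (case jt a x i j of (f, fi, fj, fij) \<Rightarrow>
     (sqrt f, fi / (2 * sqrt f), fj / (2 * sqrt f), fij / (2 * sqrt f) - fi * fj / (4 * f * sqrt f)))"
| "jt (Ps c a) x i j = (case jt a x i j of (f, fi, fj, fij) \<Rightarrow>
     ((\<Sum>n. c n * f ^ n), (\<Sum>n. diffs c n * f ^ n) * fi, (\<Sum>n. diffs c n * f ^ n) * fj,
      (\<Sum>n. diffs (diffs c) n * f ^ n) * fi * fj + (\<Sum>n. diffs c n * f ^ n) * fij))"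

lemma jt_correct:
  "wfe e x \<Longrightarrow> jt e x i j = (ev e x, ev (dr e i) x, ev (dr e j) x, ev (dr (dr e j) i) x)"
proof (induction e)
  case (Inv a)
  then have f: "ev a x \<noteq> 0" by simp
  from Inv show ?case using f by (simp add: field_simps power2_eq_square power3_eq_cube)
next
  case (Sqr a)
  then have f: "ev a x > 0" by simp
  then have "sqrt (ev a x) > 0" by simp
  from Sqr show ?case using f by (simp add: field_simps power2_eq_square)
qed (auto simp: algebra_simps)

definition base5 :: "real^5" where "base5 = pt5 (1/2) (1/2) 0 0 0"

lemma Sc_vals [simp]: "Sc 0 = 1" "Sc (Suc 0) = 0" "Sc (Suc (Suc 0)) = -1/6"
  by (simp_all add: Sc_def sin_coeff_def fact_numeral)
lemma Tc_vals [simp]: "Tc 0 = 1/6" "Tc (Suc 0) = 0" "Tc (Suc (Suc 0)) = -1/120"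
  by (simp_all add: Tc_def sin_coeff_def fact_numeral)
lemma sqrt_quarter [simp]: "sqrt (1/4) = 1/2"
  by (simp add: real_sqrt_divide)

lemmas eE_defs = eE_def eA_def eI_def eIt_def eS_def eT_def eC_def eY_def eD_def Sub_def base5_def

lemma wfe_base: "wfe eE base5"
  by (simp add: eE_defs entire_Sc entire_Tc)

lemma H11: "ev (dr (dr eE 1) 1) base5 = 48"
  using jt_correct[OF wfe_base, of 1 1] by (simp add: eE_defs diffs_def)
lemma H12: "ev (dr (dr eE 2) 1) base5 = -16"
  using jt_correct[OF wfe_base, of 1 2] by (simp add: eE_defs diffs_def)
lemma H13: "ev (dr (dr eE 3) 1) base5 = 4/3"
  using jt_correct[OF wfe_base, of 1 3] by (simp add: eE_defs diffs_def)
lemma H21: "ev (dr (dr eE 1) 2) base5 = -16"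
  using jt_correct[OF wfe_base, of 2 1] by (simp add: eE_defs diffs_def)
lemma H22: "ev (dr (dr eE 2) 2) base5 = 48"
  using jt_correct[OF wfe_base, of 2 2] by (simp add: eE_defs diffs_def)
lemma H23: "ev (dr (dr eE 3) 2) base5 = 4/3"
  using jt_correct[OF wfe_base, of 2 3] by (simp add: eE_defs diffs_def)
lemma H31: "ev (dr (dr eE 1) 3) base5 = 4/3"
  using jt_correct[OF wfe_base, of 3 1] by (simp add: eE_defs diffs_def)
lemma H32: "ev (dr (dr eE 2) 3) base5 = 4/3"
  using jt_correct[OF wfe_base, of 3 2] by (simp add: eE_defs diffs_def)
lemma H33: "ev (dr (dr eE 3) 3) base5 = 7/9"
  using jt_correct[OF wfe_base, of 3 3] by (simp add: eE_defs diffs_def)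
lemma H41: "ev (dr (dr eE 1) 4) base5 = -8"
  using jt_correct[OF wfe_base, of 4 1] by (simp add: eE_defs diffs_def)
lemma H42: "ev (dr (dr eE 2) 4) base5 = 8"
  using jt_correct[OF wfe_base, of 4 2] by (simp add: eE_defs diffs_def)
lemma H43: "ev (dr (dr eE 3) 4) base5 = -2/3"
  using jt_correct[OF wfe_base, of 4 3] by (simp add: eE_defs diffs_def)
lemma G1: "ev (dr eE 1) base5 = 0"
  using jt_correct[OF wfe_base, of 1 1] by (simp add: eE_defs diffs_def)
lemma G2: "ev (dr eE 2) base5 = 0"
  using jt_correct[OF wfe_base, of 2 2] by (simp add: eE_defs diffs_def)
lemma G3: "ev (dr eE 3) base5 = 0"
  using jt_correct[OF wfe_base, of 3 3] by (simp add: eE_defs diffs_def)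

lemma seg_in_ball:
  fixes z1 z2 c :: "'a::real_normed_vector"
  assumes "z1 \<in> ball c R" "z2 \<in> ball c R" "0 \<le> t" "t \<le> 1"
  shows "z2 + t *\<^sub>R (z1 - z2) \<in> ball c R"
proof -
  have "z2 + t *\<^sub>R (z1 - z2) = (1 - t) *\<^sub>R z2 + t *\<^sub>R z1" by (simp add: algebra_simps)
  also have "\<dots> \<in> ball c R" by (rule convexD[OF convex_ball assms(2,1)]) (use assms in auto)
  finally show ?thesis .
qed

locale sconv =
  fixes G :: "'a::euclidean_space \<Rightarrow> real" and g :: "'a \<Rightarrow> 'a" and c :: 'a and R lam :: real
  assumes lam: "lam > 0"
  and dG: "\<And>z. z \<in> ball c R \<Longrightarrow> (G has_derivative (\<lambda>h. g z \<bullet> h)) (at z)"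
  and dg: "\<And>z u t. z \<in> ball c R \<Longrightarrow> z + t *\<^sub>R u \<in> ball c R \<Longrightarrow>
     \<exists>Q. ((\<lambda>s. g (z + s *\<^sub>R u) \<bullet> u) has_real_derivative Q) (at t) \<and> Q \<ge> lam * (norm u)^2"
begin

lemma mono:
  assumes z1: "z1 \<in> ball c R" and z2: "z2 \<in> ball c R"
  shows "(g z1 - g z2) \<bullet> (z1 - z2) \<ge> lam * (norm (z1 - z2))^2"
proof -
  define u where "u = z1 - z2"
  define f where "f = (\<lambda>t. g (z2 + t *\<^sub>R u) \<bullet> u - lam * (norm u)^2 * t)"
  have "f 0 \<le> f 1"
  proof (rule DERIV_nonneg_imp_nondecreasing[of 0 1 f])
    show "(0::real) \<le> 1" by simp
  next
    fix t :: real assume t: "0 \<le> t" "t \<le> 1"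
    have "z2 + t *\<^sub>R u \<in> ball c R" unfolding u_def by (rule seg_in_ball[OF z1 z2 t])
    then obtain Q where Q: "((\<lambda>s. g (z2 + s *\<^sub>R u) \<bullet> u) has_real_derivative Q) (at t)"
      "Q \<ge> lam * (norm u)^2" using dg[OF z2] by blast
    have l: "((\<lambda>t. lam * (norm u)^2 * t) has_real_derivative lam * (norm u)^2) (at t)"
      using DERIV_cmult[OF DERIV_ident, of "lam * (norm u)^2" t] by simp
    have "(f has_real_derivative (Q - lam * (norm u)^2)) (at t)"
      unfolding f_def by (rule DERIV_diff[OF Q(1) l])
    then show "\<exists>y. (f has_real_derivative y) (at t) \<and> 0 \<le> y" using Q(2) by auto
  qed
  then show ?thesis unfolding f_def u_def by (simp add: inner_diff_left)
qed

lemma lower: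
  assumes z: "z \<in> ball c R" and w: "w \<in> ball c R"
  shows "G z \<ge> G w + g w \<bullet> (z - w) + lam / 2 * (norm (z - w))^2"
proof -
  define v where "v = z - w"
  define f where "f = (\<lambda>t. G (w + t *\<^sub>R v) - t * (g w \<bullet> v) - lam / 2 * (norm v)^2 * t^2)"
  have "f 0 \<le> f 1"
  proof (rule DERIV_nonneg_imp_nondecreasing[of 0 1 f])
    show "(0::real) \<le> 1" by simp
  next
    fix t :: real assume t: "0 \<le> t" "t \<le> 1"
    have zt: "w + t *\<^sub>R v \<in> ball c R" unfolding v_def by (rule seg_in_ball[OF z w t])
    have "((\<lambda>s. s *\<^sub>R v) has_derivative (\<lambda>s. s *\<^sub>R v)) (at t)"
      by (rule bounded_linear_imp_has_derivative[OF bounded_linear_scaleR_left])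
    from has_derivative_add[OF has_derivative_const[of w] this]
    have "((\<lambda>s. w + s *\<^sub>R v) has_derivative (\<lambda>h. h *\<^sub>R v)) (at t)" by simp
    from has_derivative_compose[OF this dG[OF zt]]
    have "((\<lambda>s. G (w + s *\<^sub>R v)) has_derivative (\<lambda>h. h * (g (w + t *\<^sub>R v) \<bullet> v))) (at t)"
      by (simp add: mult.commute)
    then have dG1: "((\<lambda>s. G (w + s *\<^sub>R v)) has_real_derivative (g (w + t *\<^sub>R v) \<bullet> v)) (at t)"
      unfolding has_field_derivative_def by (simp add: mult.commute[of _ "g (w + t *\<^sub>R v) \<bullet> v"])
    have l1: "((\<lambda>t. t * (g w \<bullet> v)) has_real_derivative (g w \<bullet> v)) (at t)"
      using DERIV_cmult[OF DERIV_ident, of "g w \<bullet> v" t] by (simp add: mult.commute)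
    have l2: "((\<lambda>t. lam / 2 * (norm v)^2 * t^2) has_real_derivative lam * (norm v)^2 * t) (at t)"
      by (rule DERIV_cong[OF DERIV_cmult[OF DERIV_pow[of 2 t], of "lam / 2 * (norm v)^2"]]) simp
    have "(f has_real_derivative (g (w + t *\<^sub>R v) \<bullet> v - g w \<bullet> v - lam * (norm v)^2 * t)) (at t)"
      unfolding f_def by (rule DERIV_diff[OF DERIV_diff[OF dG1 l1] l2])
    moreover have "g (w + t *\<^sub>R v) \<bullet> v - g w \<bullet> v - lam * (norm v)^2 * t \<ge> 0"
    proof (cases "t = 0")
      case False
      then have tp: "t > 0" using t by simp
      have "lam * (norm (w + t *\<^sub>R v - w))^2 \<le> (g (w + t *\<^sub>R v) - g w) \<bullet> (w + t *\<^sub>R v - w)"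
        by (rule mono[OF zt w])
      then have "lam * (t^2 * (norm v)^2) \<le> t * ((g (w + t *\<^sub>R v) - g w) \<bullet> v)"
        using tp by (simp add: power_mult_distrib inner_scaleR_right)
      then have "t * (lam * (norm v)^2 * t) \<le> t * ((g (w + t *\<^sub>R v) - g w) \<bullet> v)"
        by (simp add: power2_eq_square mult_ac)
      then have "lam * (norm v)^2 * t \<le> (g (w + t *\<^sub>R v) - g w) \<bullet> v"
        using tp by simp
      then show ?thesis by (simp add: inner_diff_left)
    qed simp
    ultimately show "\<exists>y. (f has_real_derivative y) (at t) \<and> 0 \<le> y" by blast
  qed
  then show ?thesis unfolding f_def v_def by (simp add: algebra_simps)
qed

lemma unique_crit:
  assumes "z1 \<in> ball c R" "z2 \<in> ball c R" "g z1 = 0" "g z2 = 0"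
  shows "z1 = z2"
proof -
  have "lam * (norm (z1 - z2))^2 \<le> 0" using mono[OF assms(1,2)] assms(3,4) by simp
  then have "(norm (z1 - z2))^2 \<le> 0" using lam by (simp add: mult_le_0_iff)
  then show ?thesis by simp
qed

lemma crit_close:
  assumes "z \<in> ball c R" "w \<in> ball c R" "g z = 0"
  shows "lam * norm (z - w) \<le> norm (g w)"
proof -
  have "lam * (norm (z - w))^2 \<le> (g z - g w) \<bullet> (z - w)" by (rule mono[OF assms(1,2)])
  also have "\<dots> = - (g w \<bullet> (z - w))" using assms(3) by simp
  also have "\<dots> \<le> norm (g w) * norm (z - w)" using Cauchy_Schwarz_ineq2[of "g w" "z - w"] by simp
  finally have "norm (z - w) * (lam * norm (z - w)) \<le> norm (z - w) * norm (g w)"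
    by (simp add: power2_eq_square mult_ac)
  then show ?thesis
    by (cases "norm (z - w) = 0") (auto simp: mult_le_cancel_left lam)
qed

lemma exists_crit:
  assumes r: "0 < r" "r < R" and small: "norm (g c) * r < lam / 2 * r^2"
  shows "\<exists>z\<in>ball c r. g z = 0"
proof -
  have cont: "continuous_on (cball c r) G"
  proof (rule continuous_at_imp_continuous_on, intro ballI)
    fix z assume "z \<in> cball c r"
    then have "z \<in> ball c R" using r by (auto simp: dist_norm)
    then show "isCont G z" using dG has_derivative_continuous by blast
  qed
  have ne: "cball c r \<noteq> {}" using r by auto
  obtain z where z: "z \<in> cball c r" and zmin: "\<forall>y\<in>cball c r. G z \<le> G y"
    using continuous_attains_inf[OF compact_cball ne cont] by force
  have cR: "c \<in> ball c R" using r by simp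
  have zR: "z \<in> ball c R" using z r by (auto simp: dist_norm)
  have "dist c z < r"
  proof (rule ccontr)
    assume "\<not> dist c z < r"
    then have dz: "norm (z - c) = r" using z by (simp add: dist_norm norm_minus_commute)
    have "G z \<ge> G c + g c \<bullet> (z - c) + lam / 2 * (norm (z - c))^2" by (rule lower[OF zR cR])
    moreover have "g c \<bullet> (z - c) \<ge> - (norm (g c) * r)"
      using Cauchy_Schwarz_ineq2[of "g c" "z - c"] dz by simp
    ultimately have "G z > G c" using small dz by simp
    moreover have "G z \<le> G c" using zmin r by simp
    ultimately show False by simp
  qed
  then have zb: "z \<in> ball c r" by simp
  have "(\<lambda>h. g z \<bullet> h) = (\<lambda>v. 0)"
    by (rule differential_zero_maxmin[OF zb open_ball dG[OF zR]]) (use zmin in auto)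
  then have "g z \<bullet> g z = 0" by metis
  then show ?thesis using zb by auto
qed

end

definition i5 :: "3 \<Rightarrow> 5" where "i5 j = (if j = 1 then 1 else if j = 2 then 2 else 3)"

lemma i5_simps [simp]: "i5 1 = 1" "i5 2 = 2" "i5 3 = 3"
  by (simp_all add: i5_def)

lemma emb5_nth [simp]:
  "emb5 z a e $ 1 = z $ 1" "emb5 z a e $ 2 = z $ 2" "emb5 z a e $ 3 = z $ 3"
  "emb5 z a e $ 4 = a" "emb5 z a e $ 5 = e"
  by (simp_all add: emb5_def)

lemma eq5I: "(\<And>k::5. x $ k = y $ k) \<Longrightarrow> x = y" by (simp add: vec_eq_iff)

lemma emb5_lin: "emb5 (z + t *\<^sub>R u) a e = emb5 z a e + t *\<^sub>R emb5 u 0 0"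
proof (rule eq5I)
  fix k :: 5 show "emb5 (z + t *\<^sub>R u) a e $ k = (emb5 z a e + t *\<^sub>R emb5 u 0 0) $ k"
    using exhaust_5[of k] by auto
qed

lemma emb5_add0: "emb5 z a 0 = emb5 z 0 0 + emb5 0 a 0"
proof (rule eq5I)
  fix k :: 5 show "emb5 z a 0 $ k = (emb5 z 0 0 + emb5 0 a 0) $ k"
    using exhaust_5[of k] by auto
qed

lemma linear_emb: "linear (\<lambda>h. emb5 h 0 0)"
proof (rule linearI)
  fix x y :: "real^3" and c :: real
  show "emb5 (x + y) 0 0 = emb5 x 0 0 + emb5 y 0 0"
  proof (rule eq5I)
    fix k :: 5 show "emb5 (x + y) 0 0 $ k = (emb5 x 0 0 + emb5 y 0 0) $ k" using exhaust_5[of k] by auto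
  qed
  show "emb5 (c *\<^sub>R x) 0 0 = c *\<^sub>R emb5 x 0 0"
  proof (rule eq5I)
    fix k :: 5 show "emb5 (c *\<^sub>R x) 0 0 $ k = (c *\<^sub>R emb5 x 0 0) $ k" using exhaust_5[of k] by auto
  qed
qed

lemma emb5_has_derivative: "((\<lambda>w. emb5 w a 0) has_derivative (\<lambda>h. emb5 h 0 0)) (at z)"
proof -
  have bl: "bounded_linear (\<lambda>h::real^3. emb5 h 0 0)"
    using linear_emb linear_conv_bounded_linear by blast
  have "((\<lambda>w. emb5 w 0 0 + emb5 0 a 0) has_derivative (\<lambda>h. emb5 h 0 0 + 0)) (at z)"
    by (rule has_derivative_add[OF bounded_linear_imp_has_derivative[OF bl] has_derivative_const])
  then show ?thesis unfolding emb5_add0[symmetric] by simp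
qed

lemma DD_emb: "DD e x (emb5 h b c) = h$1 * ev (dr e 1) x + h$2 * ev (dr e 2) x + h$3 * ev (dr e 3) x
    + b * ev (dr e 4) x + c * ev (dr e 5) x"
  by (simp add: DD_def sum_5)

lemma DD_scale: "DD e x (t *\<^sub>R v) = t * DD e x v"
  by (simp add: DD_def sum_distrib_left mult_ac)

definition gr :: "real \<Rightarrow> real^3 \<Rightarrow> real^3" where
  "gr a z = (\<chi> j. ev (dr eE (i5 j)) (emb5 z a 0))"

lemma inner3: "(x::real^3) \<bullet> y = x$1 * y$1 + x$2 * y$2 + x$3 * y$3"
  by (simp add: inner_vec_def sum_3)

lemma gr_inner: "gr a z \<bullet> h = h$1 * ev (dr eE 1) (emb5 z a 0) + h$2 * ev (dr eE 2) (emb5 z a 0)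
   + h$3 * ev (dr eE 3) (emb5 z a 0)"
  by (simp add: inner3 gr_def mult_ac)

lemma dG:
  assumes "wfe eE (emb5 z a 0)"
  shows "((\<lambda>w. ev eE (emb5 w a 0)) has_derivative (\<lambda>h. gr a z \<bullet> h)) (at z)"
proof -
  have "((\<lambda>w. ev eE (emb5 w a 0)) has_derivative (\<lambda>h. DD eE (emb5 z a 0) (emb5 h 0 0))) (at z)"
    by (rule has_deriv_comp[OF assms emb5_has_derivative])
  then show ?thesis by (simp add: DD_emb gr_inner)
qed

lemma path_deriv:
  assumes "wfe e (X + t *\<^sub>R V)"
  shows "((\<lambda>s. ev e (X + s *\<^sub>R V)) has_real_derivative DD e (X + t *\<^sub>R V) V) (at t)"
proof -
  have "((\<lambda>s. s *\<^sub>R V) has_derivative (\<lambda>s. s *\<^sub>R V)) (at t)"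
    by (rule bounded_linear_imp_has_derivative[OF bounded_linear_scaleR_left])
  from has_derivative_add[OF has_derivative_const[of X] this]
  have "((\<lambda>s. X + s *\<^sub>R V) has_derivative (\<lambda>h. h *\<^sub>R V)) (at t)" by simp
  from has_deriv_comp[OF assms this]
  have "((\<lambda>s. ev e (X + s *\<^sub>R V)) has_derivative (\<lambda>h. h * DD e (X + t *\<^sub>R V) V)) (at t)"
    by (simp add: DD_scale)
  then show ?thesis unfolding has_field_derivative_def
    by (rule has_derivative_eq_rhs) (auto simp: fun_eq_iff mult.commute)
qed

definition Hx :: "3 \<Rightarrow> 3 \<Rightarrow> real^5 \<Rightarrow> real" where
  "Hx i j x = ev (dr (dr eE (i5 j)) (i5 i)) x"

definition Qf :: "real^5 \<Rightarrow> real^3 \<Rightarrow> real" where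
  "Qf x u = u$1 * (u$1 * Hx 1 1 x + u$2 * Hx 2 1 x + u$3 * Hx 3 1 x)
          + u$2 * (u$1 * Hx 1 2 x + u$2 * Hx 2 2 x + u$3 * Hx 3 2 x)
          + u$3 * (u$1 * Hx 1 3 x + u$2 * Hx 2 3 x + u$3 * Hx 3 3 x)"

lemma dgr:
  assumes "wfe eE (emb5 (z + t *\<^sub>R u) a 0)"
  shows "((\<lambda>s. gr a (z + s *\<^sub>R u) \<bullet> u) has_real_derivative Qf (emb5 (z + t *\<^sub>R u) a 0) u) (at t)"
proof -
  let ?X = "emb5 z a 0" and ?V = "emb5 u 0 0"
  have w: "wfe (dr eE k) (?X + t *\<^sub>R ?V)" for k
    using wf_dr assms unfolding emb5_lin by blast
  have d: "((\<lambda>s. ev (dr eE k) (?X + s *\<^sub>R ?V)) has_real_derivative DD (dr eE k) (?X + t *\<^sub>R ?V) ?V) (at t)" for k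
    by (rule path_deriv[OF w])
  have "((\<lambda>s. u$1 * ev (dr eE 1) (?X + s *\<^sub>R ?V) + u$2 * ev (dr eE 2) (?X + s *\<^sub>R ?V)
     + u$3 * ev (dr eE 3) (?X + s *\<^sub>R ?V)) has_real_derivative
     u$1 * DD (dr eE 1) (?X + t *\<^sub>R ?V) ?V + u$2 * DD (dr eE 2) (?X + t *\<^sub>R ?V) ?V
     + u$3 * DD (dr eE 3) (?X + t *\<^sub>R ?V) ?V) (at t)"
    by (intro DERIV_add DERIV_cmult d)
  then show ?thesis
    unfolding gr_inner emb5_lin[symmetric] by (simp add: Qf_def Hx_def DD_emb algebra_simps)
qed

lemma sq_bound:
  fixes x y d ep :: real
  shows "\<bar>d\<bar> \<le> ep \<Longrightarrow> x * y * d \<ge> - ep * (x^2 + y^2) / 2"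
proof -
  assume d: "\<bar>d\<bar> \<le> ep"
  have "\<bar>x * y * d\<bar> = \<bar>x * y\<bar> * \<bar>d\<bar>" by (simp add: abs_mult)
  also have "\<dots> \<le> \<bar>x * y\<bar> * ep" by (rule mult_left_mono[OF d abs_ge_zero])
  finally have "\<bar>x * y * d\<bar> \<le> \<bar>x * y\<bar> * ep" .
  moreover have "\<bar>x * y\<bar> \<le> (x^2 + y^2) / 2"
    using sum_squares_bound[of x y] sum_squares_bound[of x "-y"] by (auto simp: abs_if)
  moreover have "ep \<ge> 0" using d by simp
  ultimately have "\<bar>x * y * d\<bar> \<le> ep * (x^2 + y^2) / 2"
    by (smt (verit) mult_left_mono mult.commute times_divide_eq_right)
  then show ?thesis by simp
qed

lemma quad_pd:
  fixes u1 u2 u3 :: real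
  shows "u1 * (u1 * 48 + u2 * -16 + u3 * (4/3)) + u2 * (u1 * -16 + u2 * 48 + u3 * (4/3))
     + u3 * (u1 * (4/3) + u2 * (4/3) + u3 * (7/9)) \<ge> 1/2 * (u1^2 + u2^2 + u3^2)"
proof -
  have "u1 * (u1 * 48 + u2 * -16 + u3 * (4/3)) + u2 * (u1 * -16 + u2 * 48 + u3 * (4/3))
     + u3 * (u1 * (4/3) + u2 * (4/3) + u3 * (7/9)) - 1/2 * (u1^2 + u2^2 + u3^2)
     = 95/2 * (u1 - 32/95 * u2 + 8/285 * u3)^2 + 8001/190 * (u2 + 8/189 * u3)^2 + 187/1134 * u3^2"
    by (simp add: power2_eq_square algebra_simps)
  moreover have "95/2 * (u1 - 32/95 * u2 + 8/285 * u3)^2 + 8001/190 * (u2 + 8/189 * u3)^2 + 187/1134 * u3^2 \<ge> 0"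
    by simp
  ultimately show ?thesis by linarith
qed

definition Hgood :: "real^5 \<Rightarrow> bool" where
  "Hgood x = (\<bar>Hx 1 1 x - (48)\<bar> \<le> 1/50 \<and>
  \<bar>Hx 1 2 x - (-16)\<bar> \<le> 1/50 \<and>
  \<bar>Hx 1 3 x - (4/3)\<bar> \<le> 1/50 \<and>
  \<bar>Hx 2 1 x - (-16)\<bar> \<le> 1/50 \<and>
  \<bar>Hx 2 2 x - (48)\<bar> \<le> 1/50 \<and>
  \<bar>Hx 2 3 x - (4/3)\<bar> \<le> 1/50 \<and>
  \<bar>Hx 3 1 x - (4/3)\<bar> \<le> 1/50 \<and>
  \<bar>Hx 3 2 x - (4/3)\<bar> \<le> 1/50 \<and>
  \<bar>Hx 3 3 x - (7/9)\<bar> \<le> 1/50)"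

lemma norm3_sq: "(norm (u::real^3))^2 = (u$1)^2 + (u$2)^2 + (u$3)^2"
  unfolding power2_norm_eq_inner inner3 by (simp add: power2_eq_square)

lemma lin9:
  fixes P11 P12 P13 P21 P22 P23 P31 P32 P33 Q A B C D :: real
  assumes "Q = D + (P11 + P12 + P13 + P21 + P22 + P23 + P31 + P32 + P33)" "D \<ge> 1/2 * (A + B + C)"
    "P11 \<ge> - (1/50) * (A + A) / 2"
    "P12 \<ge> - (1/50) * (B + A) / 2"
    "P13 \<ge> - (1/50) * (C + A) / 2"
    "P21 \<ge> - (1/50) * (A + B) / 2"
    "P22 \<ge> - (1/50) * (B + B) / 2"
    "P23 \<ge> - (1/50) * (C + B) / 2"
    "P31 \<ge> - (1/50) * (A + C) / 2"
    "P32 \<ge> - (1/50) * (B + C) / 2"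
    "P33 \<ge> - (1/50) * (C + C) / 2"
    "A \<ge> 0" "B \<ge> 0" "C \<ge> 0"
  shows "Q \<ge> 2/5 * (A + B + C)"
  using assms by (simp add: field_simps)

lemma Qf_lower:
  assumes h: "Hgood x"
  shows "Qf x u \<ge> 2/5 * (norm u)^2"
proof -
  have h: "\<bar>Hx 1 1 x - (48)\<bar> \<le> 1/50 \<and>
  \<bar>Hx 1 2 x - (-16)\<bar> \<le> 1/50 \<and>
  \<bar>Hx 1 3 x - (4/3)\<bar> \<le> 1/50 \<and>
  \<bar>Hx 2 1 x - (-16)\<bar> \<le> 1/50 \<and>
  \<bar>Hx 2 2 x - (48)\<bar> \<le> 1/50 \<and>
  \<bar>Hx 2 3 x - (4/3)\<bar> \<le> 1/50 \<and>
  \<bar>Hx 3 1 x - (4/3)\<bar> \<le> 1/50 \<and>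
  \<bar>Hx 3 2 x - (4/3)\<bar> \<le> 1/50 \<and>
  \<bar>Hx 3 3 x - (7/9)\<bar> \<le> 1/50" using h unfolding Hgood_def by blast
  have b11: "u$1 * u$1 * (Hx 1 1 x - (48)) \<ge> - (1/50) * ((u$1)^2 + (u$1)^2) / 2"
    by (rule sq_bound) (use h in simp)
  have b12: "u$2 * u$1 * (Hx 1 2 x - (-16)) \<ge> - (1/50) * ((u$2)^2 + (u$1)^2) / 2"
    by (rule sq_bound) (use h in simp)
  have b13: "u$3 * u$1 * (Hx 1 3 x - (4/3)) \<ge> - (1/50) * ((u$3)^2 + (u$1)^2) / 2"
    by (rule sq_bound) (use h in simp)
  have b21: "u$1 * u$2 * (Hx 2 1 x - (-16)) \<ge> - (1/50) * ((u$1)^2 + (u$2)^2) / 2"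
    by (rule sq_bound) (use h in simp)
  have b22: "u$2 * u$2 * (Hx 2 2 x - (48)) \<ge> - (1/50) * ((u$2)^2 + (u$2)^2) / 2"
    by (rule sq_bound) (use h in simp)
  have b23: "u$3 * u$2 * (Hx 2 3 x - (4/3)) \<ge> - (1/50) * ((u$3)^2 + (u$2)^2) / 2"
    by (rule sq_bound) (use h in simp)
  have b31: "u$1 * u$3 * (Hx 3 1 x - (4/3)) \<ge> - (1/50) * ((u$1)^2 + (u$3)^2) / 2"
    by (rule sq_bound) (use h in simp)
  have b32: "u$2 * u$3 * (Hx 3 2 x - (4/3)) \<ge> - (1/50) * ((u$2)^2 + (u$3)^2) / 2"
    by (rule sq_bound) (use h in simp)
  have b33: "u$3 * u$3 * (Hx 3 3 x - (7/9)) \<ge> - (1/50) * ((u$3)^2 + (u$3)^2) / 2"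
    by (rule sq_bound) (use h in simp)
  have q: "Qf x u = (u$1 * (u$1 * 48 + u$2 * -16 + u$3 * (4/3)) + u$2 * (u$1 * -16 + u$2 * 48 + u$3 * (4/3))
     + u$3 * (u$1 * (4/3) + u$2 * (4/3) + u$3 * (7/9)))
     + (u$1 * u$1 * (Hx 1 1 x - (48)) + u$2 * u$1 * (Hx 1 2 x - (-16)) + u$3 * u$1 * (Hx 1 3 x - (4/3)) + u$1 * u$2 * (Hx 2 1 x - (-16)) + u$2 * u$2 * (Hx 2 2 x - (48)) + u$3 * u$2 * (Hx 2 3 x - (4/3)) + u$1 * u$3 * (Hx 3 1 x - (4/3)) + u$2 * u$3 * (Hx 3 2 x - (4/3)) + u$3 * u$3 * (Hx 3 3 x - (7/9)))"
    unfolding Qf_def by (simp add: algebra_simps)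
  have p: "u$1 * (u$1 * 48 + u$2 * -16 + u$3 * (4/3)) + u$2 * (u$1 * -16 + u$2 * 48 + u$3 * (4/3))
     + u$3 * (u$1 * (4/3) + u$2 * (4/3) + u$3 * (7/9)) \<ge> 1/2 * ((u$1)^2 + (u$2)^2 + (u$3)^2)"
    by (rule quad_pd)
  show ?thesis unfolding norm3_sq by (rule lin9[OF q p b11 b12 b13 b21 b22 b23 b31 b32 b33 zero_le_power2 zero_le_power2 zero_le_power2])
qed

definition dirx :: "5 ex \<Rightarrow> real^5 \<Rightarrow> 5 ex" where
  "dirx e w = Add (Mul (Cst (w$1)) (dr e 1)) (Add (Mul (Cst (w$2)) (dr e 2))
     (Add (Mul (Cst (w$3)) (dr e 3)) (Add (Mul (Cst (w$4)) (dr e 4)) (Mul (Cst (w$5)) (dr e 5)))))"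

lemma ev_dirx: "ev (dirx e w) x = DD e x w"
  by (simp add: dirx_def DD_def sum_5 mult_ac)

lemma wfe_dirx: "wfe e x \<Longrightarrow> wfe (dirx e w) x"
  by (simp add: dirx_def wf_dr)

lemma ev_near:
  assumes "wfe e x0" "0 < ep"
  shows "eventually (\<lambda>x. \<bar>ev e x - ev e x0\<bar> < ep) (nhds x0)"
proof -
  have "isCont (ev e) x0" using assms isCont_ev by blast
  then have "(ev e \<longlongrightarrow> ev e x0) (nhds x0)" by (simp add: isCont_def tendsto_at_iff_tendsto_nhds)
  from tendstoD[OF this assms(2)] show ?thesis by (simp add: dist_real_def)
qed

lemma ev_near_val:
  assumes "wfe e x0" "ev e x0 = v" "0 < ep"
  shows "eventually (\<lambda>x. \<bar>ev e x - v\<bar> \<le> ep) (nhds x0)"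
  using ev_near[OF assms(1,3)] assms(2) by (auto elim: eventually_mono)

lemma wfe_d: "wfe (dr eE i) base5" "wfe (dr (dr eE i) j) base5"
  using wfe_base wf_dr by blast+

lemma Hgood_near: "eventually Hgood (nhds base5)"
proof -
  have e: "eventually (\<lambda>x. \<bar>ev (dr (dr eE j) i) x - v\<bar> \<le> 1/50) (nhds base5)"
    if "ev (dr (dr eE j) i) base5 = v" for i j v
    by (rule ev_near_val[OF wfe_d(2) that]) simp
  show ?thesis unfolding Hgood_def Hx_def i5_simps
    by (intro eventually_conj e H11 H12 H13 H21 H22 H23 H31 H32 H33)
qed

definition Uset :: "(real^5) set" where "Uset = {x. wfe eE x} \<inter> {x. 0 < x $ 2}"

lemma open_Uset: "open Uset"
proof -
  have "open {x::real^5. 0 < x $ 2}"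
    by (rule open_Collect_less[OF continuous_on_const linear_continuous_on]) (rule bounded_linear_vec_nth)
  then show ?thesis unfolding Uset_def by (intro open_Int open_wfe)
qed

lemma base5_U: "base5 \<in> Uset"
  using wfe_base by (simp add: Uset_def base5_def)

lemma emb5_base: "emb5 base3 a e = pt5 (1/2) (1/2) 0 a e"
  by (simp add: emb5_def base3_def)

lemma base5_emb: "base5 = emb5 base3 0 0"
  by (simp add: emb5_base base5_def)

definition w5 :: "real^5" where "w5 = pt5 (1/12) (-1/6) 1 1 0"
definition vv :: "real^3" where "vv = vector [1/12, -1/6, 1]"

lemma emb5_path: "emb5 (base3 + a *\<^sub>R vv) a 0 = base5 + a *\<^sub>R w5"
proof (rule eq5I)
  fix k :: 5 show "emb5 (base3 + a *\<^sub>R vv) a 0 $ k = (base5 + a *\<^sub>R w5) $ k"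
    using exhaust_5[of k] by (auto simp: base5_def w5_def vv_def base3_def)
qed

lemma norm_vv: "norm vv \<le> 2"
proof -
  have "norm vv \<le> sum (\<lambda>i. \<bar>vv$i\<bar>) UNIV" by (rule norm_le_l1_cart)
  also have "\<dots> = 5/4" by (simp add: sum_3 vv_def)
  finally show ?thesis by simp
qed

lemma norm_w5: "norm w5 \<le> 3"
proof -
  have "norm w5 \<le> sum (\<lambda>i. \<bar>w5$i\<bar>) UNIV" by (rule norm_le_l1_cart)
  also have "\<dots> = 9/4" by (simp add: sum_5 w5_def)
  finally show ?thesis by simp
qed

lemma dist_emb: "dist (emb5 z a 0) base5 \<le> 3 * dist z base3 + \<bar>a\<bar>"
proof -
  have eq: "emb5 z a 0 - base5 = emb5 (z - base3) a 0"
  proof (rule eq5I)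
    fix k :: 5 show "(emb5 z a 0 - base5) $ k = emb5 (z - base3) a 0 $ k"
      using exhaust_5[of k] by (auto simp: base5_def base3_def)
  qed
  have "dist (emb5 z a 0) base5 = norm (emb5 (z - base3) a 0)" by (simp add: dist_norm eq)
  also have "\<dots> \<le> sum (\<lambda>i. \<bar>emb5 (z - base3) a 0 $ i\<bar>) UNIV" by (rule norm_le_l1_cart)
  also have "\<dots> = \<bar>(z - base3)$1\<bar> + \<bar>(z - base3)$2\<bar> + \<bar>(z - base3)$3\<bar> + \<bar>a\<bar>"
    by (simp add: sum_5)
  also have "\<dots> \<le> 3 * dist z base3 + \<bar>a\<bar>"
    using component_le_norm_cart[of "z - base3" 1] component_le_norm_cart[of "z - base3" 2]
      component_le_norm_cart[of "z - base3" 3] unfolding dist_norm by linarith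
  finally show ?thesis .
qed

lemma DDw1: "DD (dr eE 1) base5 w5 = 0" by (simp add: DD_def sum_5 w5_def H11 H21 H31 H41)
lemma DDw2: "DD (dr eE 2) base5 w5 = 0" by (simp add: DD_def sum_5 w5_def H12 H22 H32 H42)
lemma DDw3: "DD (dr eE 3) base5 w5 = 0" by (simp add: DD_def sum_5 w5_def H13 H23 H33 H43)

lemma taylor_h:
  assumes good: "\<And>s. \<bar>s\<bar> \<le> \<bar>a\<bar> \<Longrightarrow> wfe eE (base5 + s *\<^sub>R w5) \<and>
      \<bar>ev (dirx (dirx (dr eE j) w5) w5) (base5 + s *\<^sub>R w5)\<bar> \<le> K"
    and h0: "ev (dr eE j) base5 = 0" and h1: "DD (dr eE j) base5 w5 = 0"
  shows "\<bar>ev (dr eE j) (base5 + a *\<^sub>R w5)\<bar> \<le> K / 2 * a^2"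
proof (cases "a = 0")
  case True then show ?thesis using h0 by simp
next
  case False
  define e0 where "e0 = dr eE j"
  define e1 where "e1 = dirx e0 w5"
  define e2 where "e2 = dirx e1 w5"
  define diff where "diff = (\<lambda>m::nat. if m = 0 then (\<lambda>s. ev e0 (base5 + s *\<^sub>R w5))
      else if m = 1 then (\<lambda>s. ev e1 (base5 + s *\<^sub>R w5)) else (\<lambda>s. ev e2 (base5 + s *\<^sub>R w5)))"
  have der: "\<forall>m t. m < 2 \<and> - \<bar>a\<bar> \<le> t \<and> t \<le> \<bar>a\<bar> \<longrightarrow> DERIV (diff m) t :> diff (Suc m) t"
  proof (intro allI impI)
    fix m :: nat and t :: real
    assume mt: "m < 2 \<and> - \<bar>a\<bar> \<le> t \<and> t \<le> \<bar>a\<bar>"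
    then have w: "wfe eE (base5 + t *\<^sub>R w5)" using good[of t] by auto
    then have w0: "wfe e0 (base5 + t *\<^sub>R w5)" unfolding e0_def by (rule wf_dr)
    then have w1: "wfe e1 (base5 + t *\<^sub>R w5)" unfolding e1_def by (rule wfe_dirx)
    show "DERIV (diff m) t :> diff (Suc m) t"
    proof (cases "m = 0")
      case True
      then show ?thesis using path_deriv[OF w0] by (simp add: diff_def e1_def ev_dirx)
    next
      case False
      then have "m = 1" using mt by simp
      then show ?thesis using path_deriv[OF w1] by (simp add: diff_def e2_def ev_dirx)
    qed
  qed
  have "\<exists>t. (if a < 0 then a < t \<and> t < 0 else 0 < t \<and> t < a) \<and>
     diff 0 a = (\<Sum>m<2. (diff m 0 / fact m) * (a - 0)^m) + (diff 2 t / fact 2) * (a - 0)^2"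
    by (rule Taylor[of 2 diff "diff 0" "- \<bar>a\<bar>" "\<bar>a\<bar>" 0 a]) (use der False in auto)
  then obtain t where t: "(if a < 0 then a < t \<and> t < 0 else 0 < t \<and> t < a)"
    and eq: "diff 0 a = (\<Sum>m<2. (diff m 0 / fact m) * (a - 0)^m) + (diff 2 t / fact 2) * (a - 0)^2"
    by blast
  have "\<bar>t\<bar> \<le> \<bar>a\<bar>" using t by (auto split: if_splits)
  then have K: "\<bar>ev e2 (base5 + t *\<^sub>R w5)\<bar> \<le> K" using good[of t] by (simp add: e2_def e1_def e0_def)
  have "diff 0 0 = 0" using h0 by (simp add: diff_def e0_def)
  moreover have "diff 1 0 = 0" using h1 by (simp add: diff_def e1_def ev_dirx e0_def)
  ultimately have "ev e0 (base5 + a *\<^sub>R w5) = ev e2 (base5 + t *\<^sub>R w5) / 2 * a^2"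
    using eq by (simp add: diff_def eval_nat_numeral)
  then have "\<bar>ev e0 (base5 + a *\<^sub>R w5)\<bar> = \<bar>ev e2 (base5 + t *\<^sub>R w5) / 2 * a^2\<bar>"
    by (simp only:)
  also have "\<dots> = \<bar>ev e2 (base5 + t *\<^sub>R w5)\<bar> / 2 * a^2"
    by (simp add: abs_mult)
  also have "\<dots> \<le> K / 2 * a^2" using K by (simp add: divide_right_mono mult_right_mono)
  finally show ?thesis unfolding e0_def .
qed

lemma gr_base: "gr 0 base3 = 0"
proof -
  have "gr 0 base3 $ k = 0" for k :: 3
    using exhaust_3[of k] by (auto simp: gr_def base5_emb[symmetric] G1 G2 G3)
  then show ?thesis by (simp add: vec_eq_iff)
qed

lemma gr_nth: "gr a z $ j = ev (dr eE (i5 j)) (emb5 z a 0)"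
  by (simp add: gr_def)

lemma hess_entry:
  assumes R: "0 < R" "\<forall>z\<in>ball base3 R. wfe eE (emb5 z 0 0)"
  shows "dd (\<lambda>z. dd (\<lambda>z. ev eE (emb5 z 0 0)) (axis j 1) z) (axis i 1) base3 = Hx i j base5"
proof -
  let ?G = "\<lambda>z. ev eE (emb5 z 0 0)"
  have eqU: "dd ?G (axis j 1) z = ev (dr eE (i5 j)) (emb5 z 0 0)" if "z \<in> ball base3 R" for z
  proof -
    have "frechet_derivative ?G (at z) = (\<lambda>h. gr 0 z \<bullet> h)"
      using frechet_derivative_at[OF dG[OF R(2)[rule_format, OF that]]] by simp
    then show ?thesis unfolding dd_def by (simp add: inner_axis gr_nth)
  qed
  have wb: "wfe (dr eE (i5 j)) (emb5 base3 0 0)" using wfe_base wf_dr base5_emb by metis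
  have d: "((\<lambda>z. ev (dr eE (i5 j)) (emb5 z 0 0)) has_derivative
      (\<lambda>h. DD (dr eE (i5 j)) (emb5 base3 0 0) (emb5 h 0 0))) (at base3)"
    by (rule has_deriv_comp[OF wb emb5_has_derivative])
  have d2: "((\<lambda>z. dd ?G (axis j 1) z) has_derivative
      (\<lambda>h. DD (dr eE (i5 j)) (emb5 base3 0 0) (emb5 h 0 0))) (at base3)"
    by (rule has_derivative_transform_within_open[OF d open_ball[of base3 R]]) (use R eqU in auto)
  have "dd (\<lambda>z. dd ?G (axis j 1) z) (axis i 1) base3
      = DD (dr eE (i5 j)) (emb5 base3 0 0) (emb5 (axis i 1) 0 0)"
  proof -
    have fd: "frechet_derivative (\<lambda>z. dd ?G (axis j 1) z) (at base3)
        = (\<lambda>h. DD (dr eE (i5 j)) (emb5 base3 0 0) (emb5 h 0 0))"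
      by (rule frechet_derivative_at[OF d2, symmetric])
    show ?thesis unfolding dd_def[of "\<lambda>z. dd ?G (axis j 1) z"] fd ..
  qed
  also have "\<dots> = Hx i j base5"
    unfolding Hx_def base5_emb[symmetric] DD_emb
    using exhaust_3[of i] by (auto simp: axis_def)
  finally show ?thesis .
qed

definition d2 :: "5 \<Rightarrow> 5 ex" where "d2 j = dirx (dirx (dr eE j) w5) w5"
definition Kc :: "5 \<Rightarrow> real" where "Kc j = \<bar>ev (d2 j) base5\<bar> + 1"

lemma wfe_d2: "wfe (d2 j) base5"
  unfolding d2_def by (intro wfe_dirx wf_dr wfe_base)

definition good1 :: "real^5 \<Rightarrow> bool" where
  "good1 x = (x \<in> Uset \<and> Hgood x \<and> \<bar>ev (d2 1) x\<bar> \<le> Kc 1 \<and> \<bar>ev (d2 2) x\<bar> \<le> Kc 2 \<and> \<bar>ev (d2 3) x\<bar> \<le> Kc 3)"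

lemma good1_near: "\<exists>rho>0. \<forall>x. dist x base5 < rho \<longrightarrow> good1 x"
proof -
  have k: "eventually (\<lambda>x. \<bar>ev (d2 j) x\<bar> \<le> Kc j) (nhds base5)" for j
    using ev_near[OF wfe_d2, of 1 j] unfolding Kc_def by (auto elim!: eventually_mono)
  have "eventually good1 (nhds base5)"
    unfolding good1_def
    by (intro eventually_conj k Hgood_near eventually_nhds_in_open open_Uset base5_U)
  then show ?thesis unfolding eventually_nhds_metric by blast
qed

lemma gsmall_near: "0 < eta \<Longrightarrow> \<exists>rho>0. \<forall>x. dist x base5 < rho \<longrightarrow>
    \<bar>ev (dr eE 1) x\<bar> < eta \<and> \<bar>ev (dr eE 2) x\<bar> < eta \<and> \<bar>ev (dr eE 3) x\<bar> < eta"
proof -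
  assume eta: "0 < eta"
  have k: "eventually (\<lambda>x. \<bar>ev (dr eE j) x\<bar> < eta) (nhds base5)" if "ev (dr eE j) base5 = 0" for j
    using ev_near[OF wfe_d(1) eta, of j] that by simp
  have "eventually (\<lambda>x. \<bar>ev (dr eE 1) x\<bar> < eta \<and> \<bar>ev (dr eE 2) x\<bar> < eta \<and> \<bar>ev (dr eE 3) x\<bar> < eta) (nhds base5)"
    by (intro eventually_conj k G1 G2 G3)
  then show ?thesis unfolding eventually_nhds_metric by blast
qed

lemma norm_gr: "norm (gr a z) \<le> \<bar>ev (dr eE 1) (emb5 z a 0)\<bar> + \<bar>ev (dr eE 2) (emb5 z a 0)\<bar> + \<bar>ev (dr eE 3) (emb5 z a 0)\<bar>"
proof -
  have "norm (gr a z) \<le> sum (\<lambda>i. \<bar>gr a z $ i\<bar>) UNIV" by (rule norm_le_l1_cart)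
  then show ?thesis by (simp add: sum_3 gr_nth)
qed

lemma crit_iff:
  assumes "wfe eE (emb5 z a 0)"
  shows "((\<lambda>w. ev eE (emb5 w a 0)) has_derivative (\<lambda>_. 0)) (at z) \<longleftrightarrow> gr a z = 0"
proof
  assume h: "((\<lambda>w. ev eE (emb5 w a 0)) has_derivative (\<lambda>_. 0)) (at z)"
  have "(\<lambda>h. gr a z \<bullet> h) = (\<lambda>_. 0)" by (rule has_derivative_unique[OF dG[OF assms] h])
  then have "gr a z \<bullet> gr a z = 0" by metis
  then show "gr a z = 0" by simp
next
  assume "gr a z = 0"
  then show "((\<lambda>w. ev eE (emb5 w a 0)) has_derivative (\<lambda>_. 0)) (at z)"
    using dG[OF assms] by simp
qed

lemma good_U: "good1 x \<Longrightarrow> wfe eE x" "good1 x \<Longrightarrow> Hgood x" "good1 x \<Longrightarrow> x \<in> Uset"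
  by (auto simp: good1_def Uset_def)

theorem mainTheorem6:
  shows "\<exists>U (F :: real^5 \<Rightarrow> real).
    open U \<and> pt5 (1/2) (1/2) 0 0 0 \<in> U \<and> smooth_on U F \<and>
    (\<forall>q p \<theta> a e. pt5 q p \<theta> a e \<in> U \<and> \<theta> \<noteq> 0 \<longrightarrow> F (pt5 q p \<theta> a e) = RC p q \<theta> a e) \<and>
    (\<exists>r>0. \<forall>z \<in> ball base3 r. emb5 z 0 0 \<in> U \<and> F (emb5 base3 0 0) \<le> F (emb5 z 0 0)) \<and>
    Hess3 (\<lambda>z. F (emb5 z 0 0)) base3 =
      vector [vector [48, -16, 4/3], vector [-16, 48, 4/3], vector [4/3, 4/3, 7/9]] \<and>
    (\<exists>\<delta>>0. \<exists>r>0. \<exists>C. \<forall>a. \<bar>a\<bar> < \<delta> \<longrightarrow>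
       (\<forall>z \<in> ball base3 r. emb5 z a 0 \<in> U) \<and>
       (\<exists>!z. z \<in> ball base3 r \<and> ((\<lambda>w. F (emb5 w a 0)) has_derivative (\<lambda>_. 0)) (at z)) \<and>
       (\<forall>z \<in> ball base3 r. ((\<lambda>w. F (emb5 w a 0)) has_derivative (\<lambda>_. 0)) (at z) \<longrightarrow>
          norm (z - base3 - a *\<^sub>R vector [1/12, -1/6, 1]) \<le> C * a^2))"
proof -
  obtain rho1 where rho1: "rho1 > 0" and g1: "\<And>x. dist x base5 < rho1 \<Longrightarrow> good1 x"
    using good1_near by blast
  define R where "R = rho1 / 8"
  define r where "r = R / 2"
  define lam :: real where "lam = 2/5"
  have R0: "R > 0" "r > 0" "r < R" using rho1 by (auto simp: R_def r_def)
  have inU: "good1 (emb5 z a 0)" if "z \<in> ball base3 R" "\<bar>a\<bar> < R" for z a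
  proof (rule g1)
    have "dist (emb5 z a 0) base5 \<le> 3 * dist z base3 + \<bar>a\<bar>" by (rule dist_emb)
    also have "\<dots> < rho1" using that by (simp add: R_def dist_commute)
    finally show "dist (emb5 z a 0) base5 < rho1" .
  qed
  have sc: "sconv (\<lambda>z. ev eE (emb5 z a 0)) (gr a) base3 R lam" if a: "\<bar>a\<bar> < R" for a
  proof
    show "lam > 0" by (simp add: lam_def)
    show "((\<lambda>z. ev eE (emb5 z a 0)) has_derivative (\<lambda>h. gr a z \<bullet> h)) (at z)"
      if "z \<in> ball base3 R" for z
      using dG good_U(1)[OF inU[OF that a]] by blast
    show "\<exists>Q. ((\<lambda>s. gr a (z + s *\<^sub>R u) \<bullet> u) has_real_derivative Q) (at t) \<and> Q \<ge> lam * (norm u)^2"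
      if "z \<in> ball base3 R" "z + t *\<^sub>R u \<in> ball base3 R" for z u t
    proof (intro exI conjI)
      show "((\<lambda>s. gr a (z + s *\<^sub>R u) \<bullet> u) has_real_derivative Qf (emb5 (z + t *\<^sub>R u) a 0) u) (at t)"
        by (rule dgr[OF good_U(1)[OF inU[OF that(2) a]]])
      show "Qf (emb5 (z + t *\<^sub>R u) a 0) u \<ge> lam * (norm u)^2"
        using Qf_lower[OF good_U(2)[OF inU[OF that(2) a]]] by (simp add: lam_def)
    qed
  qed
  define eta where "eta = lam * r / 8"
  have eta0: "eta > 0" using R0 by (simp add: eta_def lam_def)
  obtain rho2 where rho2: "rho2 > 0" and g2: "\<And>x. dist x base5 < rho2 \<Longrightarrow>
      \<bar>ev (dr eE 1) x\<bar> < eta \<and> \<bar>ev (dr eE 2) x\<bar> < eta \<and> \<bar>ev (dr eE 3) x\<bar> < eta"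
    using gsmall_near[OF eta0] by blast
  define delta where "delta = min rho2 (R / 2)"
  have delta0: "delta > 0" using rho2 R0 by (simp add: delta_def)
  define C where "C = (Kc 1 + Kc 2 + Kc 3) / (2 * lam)"
  have Fc: "\<forall>a. \<bar>a\<bar> < delta \<longrightarrow>
       (\<forall>z \<in> ball base3 r. emb5 z a 0 \<in> Uset) \<and>
       (\<exists>!z. z \<in> ball base3 r \<and> ((\<lambda>w. ev eE (emb5 w a 0)) has_derivative (\<lambda>_. 0)) (at z)) \<and>
       (\<forall>z \<in> ball base3 r. ((\<lambda>w. ev eE (emb5 w a 0)) has_derivative (\<lambda>_. 0)) (at z) \<longrightarrow>
          norm (z - base3 - a *\<^sub>R vector [1/12, -1/6, 1]) \<le> C * a^2)"
  proof (intro allI impI conjI)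
    fix a :: real assume a: "\<bar>a\<bar> < delta"
    then have aR: "\<bar>a\<bar> < R" "\<bar>a\<bar> < R / 2" "\<bar>a\<bar> < rho2" using R0 by (auto simp: delta_def)
    interpret S: sconv "\<lambda>z. ev eE (emb5 z a 0)" "gr a" base3 R lam by (rule sc[OF aR(1)])
    have rR: "z \<in> ball base3 R" if "z \<in> ball base3 r" for z using that R0 by auto
    show "\<forall>z \<in> ball base3 r. emb5 z a 0 \<in> Uset" using inU rR aR good_U(3) by blast
    have ci: "((\<lambda>w. ev eE (emb5 w a 0)) has_derivative (\<lambda>_. 0)) (at z) \<longleftrightarrow> gr a z = 0"
      if "z \<in> ball base3 r" for z
      by (rule crit_iff[OF good_U(1)[OF inU[OF rR[OF that] aR(1)]]])
    have gb: "norm (gr a base3) * r < lam / 2 * r^2"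
    proof -
      have "dist (emb5 base3 a 0) base5 < rho2" using dist_emb[of base3 a] aR by simp
      from g2[OF this] have "norm (gr a base3) < 3 * eta" using norm_gr[of a base3] by linarith
      then have "norm (gr a base3) * 20 < 3 * r" by (simp add: eta_def lam_def)
      then have "norm (gr a base3) < lam / 2 * r" using R0 by (simp add: lam_def)
      then show ?thesis using R0 by (simp add: power2_eq_square mult_strict_right_mono)
    qed
    obtain z0 where z0: "z0 \<in> ball base3 r" "gr a z0 = 0" using S.exists_crit[OF R0(2) R0(3) gb] by blast
    show "\<exists>!z. z \<in> ball base3 r \<and> ((\<lambda>w. ev eE (emb5 w a 0)) has_derivative (\<lambda>_. 0)) (at z)"
    proof (rule ex1I[of _ z0])
      show "z0 \<in> ball base3 r \<and> ((\<lambda>w. ev eE (emb5 w a 0)) has_derivative (\<lambda>_. 0)) (at z0)"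
        using z0 ci by blast
      fix y assume "y \<in> ball base3 r \<and> ((\<lambda>w. ev eE (emb5 w a 0)) has_derivative (\<lambda>_. 0)) (at y)"
      then have y: "y \<in> ball base3 r" "gr a y = 0" using ci by blast+
      show "y = z0" by (rule S.unique_crit[OF rR[OF y(1)] rR[OF z0(1)] y(2) z0(2)])
    qed
    show "\<forall>z \<in> ball base3 r. ((\<lambda>w. ev eE (emb5 w a 0)) has_derivative (\<lambda>_. 0)) (at z) \<longrightarrow>
          norm (z - base3 - a *\<^sub>R vector [1/12, -1/6, 1]) \<le> C * a^2"
    proof (intro ballI impI)
      fix z assume z: "z \<in> ball base3 r" "((\<lambda>w. ev eE (emb5 w a 0)) has_derivative (\<lambda>_. 0)) (at z)"
      then have gz: "gr a z = 0" using ci by blast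
      define w where "w = base3 + a *\<^sub>R vv"
      have wR: "w \<in> ball base3 R"
      proof -
        have "norm (a *\<^sub>R vv) = \<bar>a\<bar> * norm vv" by simp
        also have "\<dots> \<le> \<bar>a\<bar> * 2" using norm_vv by (simp add: mult_left_mono)
        also have "\<dots> < R" using aR by simp
        finally show ?thesis by (simp add: w_def dist_norm)
      qed
      have close: "lam * norm (z - w) \<le> norm (gr a w)" by (rule S.crit_close[OF rR[OF z(1)] wR gz])
      have hb: "\<bar>ev (dr eE j) (base5 + a *\<^sub>R w5)\<bar> \<le> Kc j / 2 * a^2"
        if j: "j = 1 \<or> j = 2 \<or> j = 3" for j
      proof (rule taylor_h)
        fix s :: real assume s: "\<bar>s\<bar> \<le> \<bar>a\<bar>"
        have "dist (base5 + s *\<^sub>R w5) base5 = \<bar>s\<bar> * norm w5" by (simp add: dist_norm)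
        also have "\<dots> \<le> \<bar>a\<bar> * 3" using s norm_w5 by (intro mult_mono) auto
        also have "\<dots> < rho1" using aR by (simp add: R_def)
        finally have "good1 (base5 + s *\<^sub>R w5)" by (rule g1)
        then show "wfe eE (base5 + s *\<^sub>R w5) \<and> \<bar>ev (dirx (dirx (dr eE j) w5) w5) (base5 + s *\<^sub>R w5)\<bar> \<le> Kc j"
          using j by (auto simp: good1_def Uset_def d2_def)
      next
        show "ev (dr eE j) base5 = 0" using j G1 G2 G3 by auto
        show "DD (dr eE j) base5 w5 = 0" using j DDw1 DDw2 DDw3 by auto
      qed
      have "norm (gr a w) \<le> Kc 1 / 2 * a^2 + Kc 2 / 2 * a^2 + Kc 3 / 2 * a^2"
        using norm_gr[of a w] hb[of 1] hb[of 2] hb[of 3] unfolding w_def emb5_path by simp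
      then have "lam * norm (z - w) \<le> (Kc 1 + Kc 2 + Kc 3) / 2 * a^2" using close by (simp add: field_simps)
      then have "norm (z - w) \<le> C * a^2" by (simp add: C_def lam_def field_simps)
      then show "norm (z - base3 - a *\<^sub>R vector [1/12, -1/6, 1]) \<le> C * a^2"
        by (simp add: w_def vv_def algebra_simps)
    qed
  qed
  have Hs: "Hess3 (\<lambda>z. ev eE (emb5 z 0 0)) base3 =
      vector [vector [48, -16, 4/3], vector [-16, 48, 4/3], vector [4/3, 4/3, 7/9]]"
  proof -
    have wR: "\<forall>z\<in>ball base3 R. wfe eE (emb5 z 0 0)" using inU good_U(1) R0 by simp
    have e: "Hess3 (\<lambda>z. ev eE (emb5 z 0 0)) base3 $ i $ j = Hx i j base5" for i j
      unfolding Hess3_def using hess_entry[OF R0(1) wR] by simp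
    show ?thesis
      unfolding vec_eq_iff
    proof (intro allI)
      fix i j :: 3
      show "Hess3 (\<lambda>z. ev eE (emb5 z 0 0)) base3 $ i $ j =
        vector [vector [48, -16, 4/3], vector [-16, 48, 4/3], vector [4/3, 4/3, 7/9]] $ i $ j"
        unfolding e Hx_def using exhaust_3[of i] exhaust_3[of j]
        by (auto simp: H11 H12 H13 H21 H22 H23 H31 H32 H33)
    qed
  qed
  have lm: "\<forall>z \<in> ball base3 R. emb5 z 0 0 \<in> Uset \<and> ev eE (emb5 base3 0 0) \<le> ev eE (emb5 z 0 0)"
  proof
    fix z assume z: "z \<in> ball base3 R"
    interpret S: sconv "\<lambda>z. ev eE (emb5 z 0 0)" "gr 0" base3 R lam by (rule sc) (use R0 in simp)
    have "ev eE (emb5 z 0 0) \<ge> ev eE (emb5 base3 0 0) + gr 0 base3 \<bullet> (z - base3) + lam / 2 * (norm (z - base3))^2"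
      by (rule S.lower[OF z]) (use R0 in simp)
    then have "ev eE (emb5 z 0 0) \<ge> ev eE (emb5 base3 0 0) + (norm (z - base3))^2 / 5"
      by (simp add: gr_base lam_def)
    then have "ev eE (emb5 z 0 0) \<ge> ev eE (emb5 base3 0 0)"
      using zero_le_power2[of "norm (z - base3)"] by linarith
    then show "emb5 z 0 0 \<in> Uset \<and> ev eE (emb5 base3 0 0) \<le> ev eE (emb5 z 0 0)"
      using good_U(3)[OF inU[OF z]] R0 by simp
  qed
  have sm: "smooth_on Uset (ev eE)"
    unfolding smooth_on_def
    by (intro allI Ck_ev[OF open_Uset]) (auto simp: Uset_def)
  have rc: "\<forall>q p \<theta> a e. pt5 q p \<theta> a e \<in> Uset \<and> \<theta> \<noteq> 0 \<longrightarrow> ev eE (pt5 q p \<theta> a e) = RC p q \<theta> a e"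
    by (auto simp: Uset_def intro!: ev_eE_RC)
  show ?thesis
    apply (rule exI[of _ Uset], rule exI[of _ "ev eE"])
    using open_Uset base5_U sm rc lm R0 Hs Fc delta0 unfolding base5_def
    by blast
qed

end
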